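(* Let $n\ge1$ and $x_k=-\cos\frac{k\pi}{n}$, $k=0,\dots,n$. Assign to each node a base point $b$ and offset $u_k=x_k-b$ as follows: if $x_k\in[-1,-\tfrac12)$ then $b=-1$; if $x_k\in[-\tfrac12,\tfrac12]$ then $b=0$; if $x_k\in(\tfrac12,1]$ then $b=1$. Given reals $\theta_0,\dots,\theta_n$, let $\hat u_k=u_k(1+\theta_k)$ and $\tilde x_k=b+\hat u_k$ (with $b$ the base point of $x_k$). Then for every $k\in\{0,\dots,n\}$, \[ \sum_{j\neq k}|r_{jk}(\mathbf{x},\tilde{\mathbf{x}})|\le\|\theta\|_\infty\bigl(3.2+2.3\,n+4.3\,n\log(n+1)\bigr). \]
   Context: $r_{jk}(\mathbf{x},\tilde{\mathbf{x}}):=\dfrac{\tilde x_k-\tilde x_j}{x_k-x_j}-1$ for $j\neq k$; $\|\theta\|_\infty=\max_k|\theta_k|$; $\log$ is the natural logarithm. *)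

theory Defs
  imports Complex_Main
begin

definition cheb_node :: "nat \<Rightarrow> nat \<Rightarrow> real" where
  "cheb_node n k = - cos (real k * pi / real n)"

definition base_point :: "real \<Rightarrow> real" where
  "base_point x = (if x < -1/2 then -1 else if x \<le> 1/2 then 0 else 1)"

definition offset :: "real \<Rightarrow> real" where
  "offset x = x - base_point x"

definition perturbed_node :: "real \<Rightarrow> real \<Rightarrow> real" where
  "perturbed_node x th = base_point x + offset x * (1 + th)"

definition r_ratio :: "(nat \<Rightarrow> real) \<Rightarrow> (nat \<Rightarrow> real) \<Rightarrow> nat \<Rightarrow> nat \<Rightarrow> real" where
  "r_ratio x xt j k = (xt k - xt j) / (x k - x j) - 1"

definition sup_norm :: "nat \<Rightarrow> (nat \<Rightarrow> real) \<Rightarrow> real" where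
  "sup_norm n \<theta> = Max ((\<lambda>k. \<bar>\<theta> k\<bar>) ` {0..n})"

end

theory Submission
  imports Defs "HOL-Analysis.Analysis"
begin

lemma sin_lower:
  fixes d :: real
  assumes "0 \<le> d" "d \<le> pi/2"
  shows "d/3 \<le> sin d"
proof -
  have b: "\<bar>sin d - (\<Sum>m<3. sin_coeff m * d ^ m)\<bar> \<le> inverse (fact 3) * \<bar>d\<bar> ^ 3"
    by (rule Maclaurin_sin_bound)
  have s: "(\<Sum>m<3. sin_coeff m * d ^ m) = d"
    by (simp add: eval_nat_numeral sin_coeff_def)
  have "\<bar>sin d - d\<bar> \<le> d^3/6" using b assms(1) unfolding s by (simp add: fact_numeral)
  hence "d - d^3/6 \<le> sin d" using abs_ge_minus_self[of "sin d - d"] by linarith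
  moreover have "d^2 \<le> 4"
  proof -
    have "d \<le> 2" using assms pi_less_4 by linarith
    hence "d * d \<le> 2 * 2" using assms(1) by (intro mult_mono) auto
    thus ?thesis by (simp add: power2_eq_square)
  qed
  hence "d^3 \<le> 4 * d" using assms(1)
    by (metis mult_right_mono power2_eq_square power3_eq_cube mult.assoc mult.commute)
  ultimately show ?thesis by linarith
qed

lemma offset_bound:
  fixes x :: real
  assumes "\<bar>x\<bar> \<le> 1"
  shows "\<bar>offset x\<bar> \<le> 2/3 * (1 - x^2)"
proof -
  have e: "1 - x^2 = (1 - x) * (1 + x)" by (simp add: algebra_simps power2_eq_square)
  consider "x < -1/2" | "-1/2 \<le> x" "x \<le> 1/2" | "x > 1/2" by linarith
  then show ?thesis
  proof cases
    case 1
    hence "offset x = 1 + x" by (simp add: offset_def base_point_def)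
    moreover have "(1 + x) * 3 \<le> (1 + x) * (2 - 2*x)"
      using 1 assms by (intro mult_left_mono) auto
    hence "3 + 3*x \<le> 2 - 2*x^2" by (simp add: algebra_simps power2_eq_square)
    ultimately show ?thesis using 1 assms by simp
  next
    case 2
    hence "offset x = x" by (simp add: offset_def base_point_def)
    moreover have "x^2 \<le> 1/4"
    proof -
      have "\<bar>x\<bar> * \<bar>x\<bar> \<le> 1/2 * (1/2)" using 2 by (intro mult_mono) auto
      thus ?thesis by (simp add: power2_eq_square abs_mult_self)
    qed
    ultimately show ?thesis using 2 by auto
  next
    case 3
    hence "offset x = x - 1" by (simp add: offset_def base_point_def)
    moreover have "(1 - x) * 3 \<le> (1 - x) * (2 + 2*x)"
      using 3 assms by (intro mult_left_mono) auto
    hence "3 - 3*x \<le> 2 - 2*x^2" by (simp add: algebra_simps power2_eq_square)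
    ultimately show ?thesis using 3 assms by simp
  qed
qed

lemma term_bound:
  assumes "n \<ge> 1" "j \<le> n" "k \<le> n" "j \<noteq> k"
  shows "\<bar>offset (cheb_node n k)\<bar> + \<bar>offset (cheb_node n j)\<bar>
           \<le> 4/3 * real n / \<bar>real k - real j\<bar> * \<bar>cheb_node n k - cheb_node n j\<bar>"
    and "cheb_node n k \<noteq> cheb_node n j"
proof -
  define a where "a = real k * pi / real n"
  define c where "c = real j * pi / real n"
  define s where "s = (a + c) / 2"
  define d where "d = (a - c) / 2"
  have np: "real n > 0" using assms by auto
  have a0: "0 \<le> a" "a \<le> pi" using assms np unfolding a_def by (auto simp: field_simps)
  have c0: "0 \<le> c" "c \<le> pi" using assms np unfolding c_def by (auto simp: field_simps)
  have kj: "real k \<noteq> real j" using assms by auto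
  have ac: "a \<noteq> c" using kj np unfolding a_def c_def by (auto simp: field_simps)
  have s0: "0 < s" "s < pi" using a0 c0 ac unfolding s_def by auto
  have sin_s: "sin s > 0" using s0 sin_gt_zero by auto
  have "d = (real k - real j) * pi / (2 * real n)"
    unfolding d_def a_def c_def using np by (simp add: field_simps)
  hence dabs: "\<bar>d\<bar> = \<bar>real k - real j\<bar> * pi / (2 * real n)"
    using np by (simp add: abs_divide abs_mult)
  have dle: "\<bar>d\<bar> \<le> pi/2" using a0 c0 unfolding d_def by auto
  have sind: "\<bar>sin d\<bar> \<ge> \<bar>d\<bar>/3"
  proof (cases "d \<ge> 0")
    case True thus ?thesis using sin_lower[of d] dle by auto
  next
    case False thus ?thesis using sin_lower[of "-d"] dle by auto
  qed
  have kjpos: "\<bar>real k - real j\<bar> > 0" using kj by auto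
  have dlow: "\<bar>d\<bar> \<ge> \<bar>real k - real j\<bar> * 3 / (2 * real n)"
    unfolding dabs using pi_gt3 np kjpos by (intro divide_right_mono mult_left_mono) auto
  have xk: "cheb_node n k = - cos a" unfolding cheb_node_def a_def by simp
  have xj: "cheb_node n j = - cos c" unfolding cheb_node_def c_def by simp
  have delta: "cheb_node n k - cheb_node n j = 2 * sin s * sin d"
    unfolding xk xj s_def d_def using cos_diff_cos[of c a] by (simp add: add.commute)
  have adelta: "\<bar>cheb_node n k - cheb_node n j\<bar> = 2 * sin s * \<bar>sin d\<bar>"
    unfolding delta using sin_s by (simp add: abs_mult)
  have dpos: "\<bar>sin d\<bar> > 0" using sind dlow kjpos np
    by (smt (verit) divide_pos_pos mult_pos_pos)
  show "cheb_node n k \<noteq> cheb_node n j" using adelta sin_s dpos by auto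
  have ua: "\<bar>offset (cheb_node n k)\<bar> \<le> 2/3 * sin a"
  proof -
    have "\<bar>offset (cheb_node n k)\<bar> \<le> 2/3 * (sin a)^2"
      using offset_bound[of "cheb_node n k"] unfolding xk by (simp add: sin_squared_eq)
    moreover have "(sin a)^2 \<le> sin a"
      using sin_ge_zero[OF a0] sin_le_one[of a] by (simp add: power2_eq_square mult_left_le_one_le)
    ultimately show ?thesis by linarith
  qed
  have uc: "\<bar>offset (cheb_node n j)\<bar> \<le> 2/3 * sin c"
  proof -
    have "\<bar>offset (cheb_node n j)\<bar> \<le> 2/3 * (sin c)^2"
      using offset_bound[of "cheb_node n j"] unfolding xj by (simp add: sin_squared_eq)
    moreover have "(sin c)^2 \<le> sin c"
      using sin_ge_zero[OF c0] sin_le_one[of c] by (simp add: power2_eq_square mult_left_le_one_le)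
    ultimately show ?thesis by linarith
  qed
  have "sin a + sin c = 2 * sin s * cos d" unfolding s_def d_def by (rule sin_plus_sin)
  also have "\<dots> \<le> 2 * sin s" using sin_s cos_le_one[of d] by simp
  finally have sac: "sin a + sin c \<le> 2 * sin s" .
  have "4/3 * sin s \<le> 4/3 * real n / \<bar>real k - real j\<bar> * (2 * sin s * \<bar>sin d\<bar>)"
  proof -
    have "2 * sin s * \<bar>sin d\<bar> \<ge> 2 * sin s * (\<bar>real k - real j\<bar> / (2 * real n))"
    proof -
      have "\<bar>real k - real j\<bar> * 3 / (2*real n) / 3 = \<bar>real k - real j\<bar>/(2*real n)" by simp
      hence "\<bar>sin d\<bar> \<ge> \<bar>real k - real j\<bar>/(2*real n)" using sind dlow by linarith
      thus ?thesis using sin_s by (intro mult_left_mono) auto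
    qed
    note h = this
    have "4/3 * real n / \<bar>real k - real j\<bar> * (2 * sin s * \<bar>sin d\<bar>)
        \<ge> 4/3 * real n / \<bar>real k - real j\<bar> * (2 * sin s * (\<bar>real k - real j\<bar> / (2 * real n)))"
      by (rule mult_left_mono[OF h]) (use np in simp)
    moreover have "4/3 * real n / \<bar>real k - real j\<bar> * (2 * sin s * (\<bar>real k - real j\<bar> / (2 * real n)))
        = 4/3 * sin s" using np kjpos by (simp add: field_simps)
    ultimately show ?thesis by linarith
  qed
  thus "\<bar>offset (cheb_node n k)\<bar> + \<bar>offset (cheb_node n j)\<bar>
           \<le> 4/3 * real n / \<bar>real k - real j\<bar> * \<bar>cheb_node n k - cheb_node n j\<bar>"
    unfolding adelta using ua uc sac by linarith
qed

lemma harm_le_ln: "n \<ge> 1 \<Longrightarrow> (harm n :: real) \<le> 1 + ln (real n)"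
proof (induction n rule: dec_induct)
  case base thus ?case by (simp add: harm_def)
next
  case (step m)
  have mp: "real m > 0" using step by auto
  have "ln (real m / (real m + 1)) \<le> real m / (real m + 1) - 1"
    using mp by (intro ln_le_minus_one) auto
  also have "\<dots> = - inverse (real m + 1)" using mp by (simp add: field_simps)
  finally have "inverse (real m + 1) \<le> ln (real m + 1) - ln (real m)"
    using mp by (simp add: ln_div)
  thus ?case using step by (simp add: harm_Suc add.commute)
qed

lemma harm_le_ln1: "(harm n :: real) \<le> 1 + ln (real n + 1)"
proof (cases "n = 0")
  case True thus ?thesis by (simp add: harm_def)
next
  case False
  hence "(harm n :: real) \<le> 1 + ln (real n)" by (intro harm_le_ln) auto
  moreover have "ln (real n) \<le> ln (real n + 1)" using False by simp
  ultimately show ?thesis by linarith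
qed

lemma sum_inv_dist:
  assumes "k \<le> n"
  shows "(\<Sum>j\<in>{0..n} - {k}. 1 / \<bar>real k - real j\<bar>) \<le> 2 * (harm n :: real)"
proof -
  let ?g = "\<lambda>j. 1 / \<bar>real k - real j\<bar>"
  have split: "{0..n} - {k} = {..<k} \<union> {Suc k..n}" using assms by auto
  have disj: "{..<k} \<inter> {Suc k..n} = {}" by auto
  have s1: "(\<Sum>j<k. ?g j) = harm k"
  proof -
    have "(\<Sum>j<k. ?g j) = (\<Sum>i<k. ?g (k - Suc i))" by (rule sum.nat_diff_reindex[symmetric])
    also have "\<dots> = (\<Sum>i<k. inverse (of_nat (Suc i)))"
      by (intro sum.cong) (auto simp: of_nat_diff divide_inverse)
    finally show ?thesis by (simp add: harm_altdef)
  qed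
  have s2: "(\<Sum>j\<in>{Suc k..n}. ?g j) = harm (n - k)"
  proof -
    have im: "{Suc k..n} = (\<lambda>i. i + k) ` {1..n-k}"
    proof
      show "{Suc k..n} \<subseteq> (\<lambda>i. i + k) ` {1..n-k}"
      proof
        fix j assume "j \<in> {Suc k..n}"
        thus "j \<in> (\<lambda>i. i + k) ` {1..n-k}" by (intro image_eqI[of _ _ "j - k"]) auto
      qed
    qed auto
    have "(\<Sum>j\<in>{Suc k..n}. ?g j) = (\<Sum>i\<in>{1..n-k}. ?g (i + k))"
      unfolding im by (subst sum.reindex) (auto simp: inj_on_def)
    also have "\<dots> = (\<Sum>i\<in>{1..n-k}. inverse (of_nat i))"
      by (intro sum.cong) (auto simp: divide_inverse)
    finally show ?thesis by (simp add: harm_def)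
  qed
  have "(\<Sum>j\<in>{0..n} - {k}. ?g j) = (\<Sum>j<k. ?g j) + (\<Sum>j\<in>{Suc k..n}. ?g j)"
    unfolding split by (rule sum.union_disjoint) auto
  also have "\<dots> = harm k + harm (n - k)" by (simp only: s1 s2)
  also have "\<dots> \<le> harm n + harm n" by (intro add_mono harm_mono) (use assms in auto)
  finally show ?thesis by simp
qed

theorem theorem4:
  fixes n :: nat and \<theta> :: "nat \<Rightarrow> real" and k :: nat
  assumes "n \<ge> 1" and "k \<le> n"
  shows "(\<Sum>j\<in>{0..n} - {k}.
            \<bar>r_ratio (cheb_node n) (\<lambda>i. perturbed_node (cheb_node n i) (\<theta> i)) j k\<bar>)
         \<le> sup_norm n \<theta> * (3.2 + 2.3 * real n + 4.3 * real n * ln (real n + 1))"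
proof -
  define M where "M = sup_norm n \<theta>"
  have Mth: "\<bar>\<theta> i\<bar> \<le> M" if "i \<le> n" for i
    unfolding M_def sup_norm_def using that by (intro Max_ge) auto
  have M0: "M \<ge> 0" using Mth[of 0] by auto
  have pn: "perturbed_node x th = x + offset x * th" for x th
    unfolding perturbed_node_def offset_def by (simp add: algebra_simps)
  have tb: "\<bar>r_ratio (cheb_node n) (\<lambda>i. perturbed_node (cheb_node n i) (\<theta> i)) j k\<bar>
      \<le> M * (4/3 * real n) * (1 / \<bar>real k - real j\<bar>)" if j: "j \<in> {0..n} - {k}" for j
  proof -
    have jn: "j \<le> n" "j \<noteq> k" using j by auto
    note T = term_bound[OF assms(1) jn(1) assms(2) jn(2)]
    define xk where "xk = cheb_node n k"
    define xj where "xj = cheb_node n j"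
    define uk where "uk = offset xk"
    define uj where "uj = offset xj"
    have ne: "xk - xj \<noteq> 0" using T(2) unfolding xk_def xj_def by simp
    have "r_ratio (cheb_node n) (\<lambda>i. perturbed_node (cheb_node n i) (\<theta> i)) j k
        = (uk * \<theta> k - uj * \<theta> j) / (xk - xj)"
      unfolding r_ratio_def pn xk_def[symmetric] xj_def[symmetric] uk_def uj_def
      using ne by (simp add: field_simps)
    hence r: "\<bar>r_ratio (cheb_node n) (\<lambda>i. perturbed_node (cheb_node n i) (\<theta> i)) j k\<bar>
        = \<bar>uk * \<theta> k - uj * \<theta> j\<bar> / \<bar>xk - xj\<bar>" by (simp add: abs_divide)
    have "\<bar>uk * \<theta> k - uj * \<theta> j\<bar> \<le> \<bar>uk\<bar> * M + \<bar>uj\<bar> * M"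
    proof -
      have "\<bar>uk * \<theta> k\<bar> \<le> \<bar>uk\<bar> * M" unfolding abs_mult
        using Mth[OF assms(2)] by (intro mult_left_mono) auto
      moreover have "\<bar>uj * \<theta> j\<bar> \<le> \<bar>uj\<bar> * M" unfolding abs_mult
        using Mth[OF jn(1)] by (intro mult_left_mono) auto
      ultimately show ?thesis by (smt (verit) abs_triangle_ineq4)
    qed
    also have "\<dots> = M * (\<bar>uk\<bar> + \<bar>uj\<bar>)" by (simp add: algebra_simps)
    also have "\<dots> \<le> M * (4/3 * real n / \<bar>real k - real j\<bar> * \<bar>xk - xj\<bar>)"
      using T(1) M0 unfolding uk_def uj_def xk_def xj_def by (intro mult_left_mono) auto
    finally have "\<bar>uk * \<theta> k - uj * \<theta> j\<bar> / \<bar>xk - xj\<bar>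
        \<le> M * (4/3 * real n / \<bar>real k - real j\<bar> * \<bar>xk - xj\<bar>) / \<bar>xk - xj\<bar>"
      by (intro divide_right_mono) auto
    also have "\<dots> = M * (4/3 * real n) * (1 / \<bar>real k - real j\<bar>)" using ne by (simp add: field_simps)
    finally show ?thesis unfolding r .
  qed
  have "(\<Sum>j\<in>{0..n} - {k}.
            \<bar>r_ratio (cheb_node n) (\<lambda>i. perturbed_node (cheb_node n i) (\<theta> i)) j k\<bar>)
      \<le> (\<Sum>j\<in>{0..n} - {k}. M * (4/3 * real n) * (1 / \<bar>real k - real j\<bar>))"
    by (intro sum_mono tb)
  also have "\<dots> = M * (4/3 * real n) * (\<Sum>j\<in>{0..n} - {k}. 1 / \<bar>real k - real j\<bar>)"
    by (simp add: sum_distrib_left)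
  also have "\<dots> \<le> M * (4/3 * real n) * (2 * (1 + ln (real n + 1)))"
  proof (intro mult_left_mono)
    show "(\<Sum>j\<in>{0..n} - {k}. 1 / \<bar>real k - real j\<bar>) \<le> 2 * (1 + ln (real n + 1))"
      using sum_inv_dist[OF assms(2)] harm_le_ln1[of n] by (smt (verit))
  qed (use M0 in auto)
  also have "\<dots> = M * (4/3 * real n * (2 * (1 + ln (real n + 1))))" by (simp only: mult.assoc)
  also have "\<dots> \<le> M * (3.2 + 2.3 * real n + 4.3 * real n * ln (real n + 1))"
  proof (intro mult_left_mono[OF _ M0])
    define L where "L = ln (real n + 1)"
    have "ln (2::real) \<le> L" unfolding L_def using assms(1) by simp
    hence L: "L \<ge> 2/3" using ln2_ge_two_thirds by linarith
    have "real n * L \<ge> real n * (2/3)" using L by (intro mult_left_mono) auto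
    thus "4/3 * real n * (2 * (1 + ln (real n + 1))) \<le> 3.2 + 2.3 * real n + 4.3 * real n * ln (real n + 1)"
      unfolding L_def[symmetric] by (simp add: algebra_simps)
  qed
  finally show ?thesis unfolding M_def .
qed

end
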